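(* Let $G=(V,E)$ be a vertex-transitive simple undirected graph with $V=[n]$ and let $k\ge1$ be an integer. Consider the problem $$\max_{Z,X\in\mathbb S^n}\langle I,Z\rangle\ \text{ s.t. } Z_{ij}=0\ (\{i,j\}\in E),\ X_{ii}=0\ (i\in[n]),\ Z\ge0,\ X\ge0,\ Z-X\succeq0,\ \begin{bmatrix}1&\mathrm{diag}(Z)^{\top}\\ \mathrm{diag}(Z)&Z+(k-1)X\end{bmatrix}\succeq0.$$ Then the constraints $Z_{ii}-Z_{ij}-(k-1)X_{ij}\ge 0$ for all $i,j\in[n]$ with $i\ne j$ are redundant for this problem, i.e., adding them does not change its optimal value (there is an optimal solution satisfying them).
   Context: A graph is vertex-transitive if for any two vertices there is a graph automorphism mapping one to the other. $\mathbb S^n$ denotes real symmetric $n\times n$ matrices, $\langle A,B\rangle=\mathrm{trace}(AB)$, $\ge0$ entrywise nonnegativity, $\succeq0$ positive semidefiniteness, $\mathrm{diag}(Z)$ the vector of diagonal entries. *)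

theory Defs
  imports "HOL-Analysis.Analysis"
begin

definition symmetric_mat :: "real^'n^'n \<Rightarrow> bool" where
  "symmetric_mat A \<longleftrightarrow> transpose A = A"

definition psd :: "real^'n^'n \<Rightarrow> bool" where
  "psd A \<longleftrightarrow> symmetric_mat A \<and> (\<forall>x. 0 \<le> x \<bullet> (A *v x))"

definition nonneg_mat :: "real^'n^'n \<Rightarrow> bool" where
  "nonneg_mat A \<longleftrightarrow> (\<forall>i j. 0 \<le> A $ i $ j)"

definition simple_graph :: "('n \<Rightarrow> 'n \<Rightarrow> bool) \<Rightarrow> bool" where
  "simple_graph E \<longleftrightarrow> (\<forall>i j. E i j \<longleftrightarrow> E j i) \<and> (\<forall>i. \<not> E i i)"

definition vertex_transitive :: "('n \<Rightarrow> 'n \<Rightarrow> bool) \<Rightarrow> bool" where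
  "vertex_transitive E \<longleftrightarrow>
     (\<forall>u v. \<exists>\<sigma>. bij \<sigma> \<and> (\<forall>a b. E a b \<longleftrightarrow> E (\<sigma> a) (\<sigma> b)) \<and> \<sigma> u = v)"

text \<open>The (n+1)x(n+1) block matrix [[1, diag(Z)^T],[diag(Z), Z+(k-1)X]], indexed by 'n option
  (None is the extra first row/column).\<close>
definition block_mat :: "nat \<Rightarrow> real^'n^'n \<Rightarrow> real^'n^'n \<Rightarrow> real^('n option)^('n option)" where
  "block_mat k Z X = (\<chi> i j. case (i, j) of
       (None, None) \<Rightarrow> 1
     | (None, Some b) \<Rightarrow> Z $ b $ b
     | (Some a, None) \<Rightarrow> Z $ a $ a
     | (Some a, Some b) \<Rightarrow> Z $ a $ b + (real k - 1) * X $ a $ b)"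

definition feasible :: "('n \<Rightarrow> 'n \<Rightarrow> bool) \<Rightarrow> nat \<Rightarrow> real^'n^'n \<Rightarrow> real^'n^'n \<Rightarrow> bool" where
  "feasible E k Z X \<longleftrightarrow>
     symmetric_mat Z \<and> symmetric_mat X \<and>
     (\<forall>i j. E i j \<longrightarrow> Z $ i $ j = 0) \<and>
     (\<forall>i. X $ i $ i = 0) \<and>
     nonneg_mat Z \<and> nonneg_mat X \<and>
     psd (Z - X) \<and>
     psd (block_mat k Z X)"

end

theory Submission
  imports Defs
begin

lemma qf: "x \<bullet> (A *v x) = (\<Sum>i\<in>UNIV. \<Sum>j\<in>UNIV. x$i * A$i$j * x$j)"
  by (simp add: inner_vec_def matrix_vector_mult_def sum_distrib_left sum_distrib_right mult_ac)

lemma sym_iff: "symmetric_mat A \<longleftrightarrow> (\<forall>i j. A$i$j = A$j$i)"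
  unfolding symmetric_mat_def transpose_def vec_eq_iff by auto

lemma psd_iff: "psd A \<longleftrightarrow> (\<forall>i j. A$i$j = A$j$i) \<and> (\<forall>x. 0 \<le> (\<Sum>i\<in>UNIV. \<Sum>j\<in>UNIV. x$i * A$i$j * x$j))"
  unfolding psd_def sym_iff qf by auto

lemma sum_two:
  fixes f :: "'n::finite \<Rightarrow> real"
  assumes "i \<noteq> j" "\<And>a. a \<noteq> i \<Longrightarrow> a \<noteq> j \<Longrightarrow> f a = 0"
  shows "sum f UNIV = f i + f j"
proof -
  have "sum f UNIV = sum f {i,j}"
    by (rule sum.mono_neutral_right) (use assms in auto)
  then show ?thesis using assms(1) by simp
qed

lemma psd2:
  assumes "psd A" "i \<noteq> j"
  shows "0 \<le> t * t * A$i$i + t * s * (A$i$j + A$j$i) + s * s * A$j$j"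
proof -
  define x where "x = (\<chi> a. if a = i then t else if a = j then s else 0)"
  have "0 \<le> (\<Sum>a\<in>UNIV. \<Sum>b\<in>UNIV. x$a * A$a$b * x$b)" using assms(1) psd_iff by blast
  also have "\<dots> = (\<Sum>a\<in>UNIV. x$a * A$a$i * x$i + x$a * A$a$j * x$j)"
    by (rule sum.cong[OF refl], rule sum_two) (use assms(2) in \<open>auto simp: x_def\<close>)
  also have "\<dots> = (x$i * A$i$i * x$i + x$i * A$i$j * x$j) + (x$j * A$j$i * x$i + x$j * A$j$j * x$j)"
    by (rule sum_two) (use assms(2) in \<open>auto simp: x_def\<close>)
  also have "\<dots> = t * t * A$i$i + t * s * (A$i$j + A$j$i) + s * s * A$j$j"
    using assms(2) by (simp add: x_def algebra_simps)
  finally show ?thesis .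
qed


definition permm :: "('n \<Rightarrow> 'n) \<Rightarrow> real^'n^'n \<Rightarrow> real^'n^'n" where
  "permm \<sigma> A = (\<chi> i j. A $ \<sigma> i $ \<sigma> j)"

lemma permm_nth[simp]: "permm \<sigma> A $ i $ j = A $ \<sigma> i $ \<sigma> j"
  by (simp add: permm_def)

lemma psd_perm:
  fixes A :: "real^'n::finite^'n"
  assumes "psd A" "bij \<sigma>"
  shows "psd (permm \<sigma> A)"
  unfolding psd_iff
proof (intro conjI allI)
  fix i j show "permm \<sigma> A $ i $ j = permm \<sigma> A $ j $ i" using assms(1) unfolding psd_iff permm_nth by blast
next
  fix x :: "real^'n"
  define y where "y = (\<chi> i. x $ inv \<sigma> i)"
  have yx: "y $ \<sigma> i = x $ i" for i using assms(2) by (simp add: y_def bij_is_inj)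
  have "0 \<le> (\<Sum>i\<in>UNIV. \<Sum>j\<in>UNIV. y$i * A$i$j * y$j)" using assms(1) psd_iff by blast
  also have "\<dots> = (\<Sum>i\<in>UNIV. \<Sum>j\<in>UNIV. y$(\<sigma> i) * A$(\<sigma> i)$(\<sigma> j) * y$(\<sigma> j))"
  proof -
    have r: "(\<Sum>i\<in>UNIV. g (\<sigma> i)) = (\<Sum>i\<in>UNIV. g i)" for g :: "'n \<Rightarrow> real"
      using sum.reindex_bij_betw[OF assms(2)] .
    show ?thesis by (subst r[symmetric]) (subst r[symmetric], rule refl)
  qed
  also have "\<dots> = (\<Sum>i\<in>UNIV. \<Sum>j\<in>UNIV. x$i * permm \<sigma> A$i$j * x$j)" by (simp add: yx)
  finally show "0 \<le> (\<Sum>i\<in>UNIV. \<Sum>j\<in>UNIV. x$i * permm \<sigma> A$i$j * x$j)" .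
qed

definition avg :: "'s set \<Rightarrow> ('s \<Rightarrow> real^'n^'n) \<Rightarrow> real^'n^'n" where
  "avg S M = (\<chi> i j. (\<Sum>\<sigma>\<in>S. M \<sigma> $ i $ j) / real (card S))"

lemma avg_nth[simp]: "avg S M $ i $ j = (\<Sum>\<sigma>\<in>S. M \<sigma> $ i $ j) / real (card S)"
  by (simp add: avg_def)

lemma psd_avg:
  fixes M :: "'s \<Rightarrow> real^'n::finite^'n"
  assumes "finite S" "S \<noteq> {}" "\<And>\<sigma>. \<sigma> \<in> S \<Longrightarrow> psd (M \<sigma>)"
  shows "psd (avg S M)"
  unfolding psd_iff
proof (intro conjI allI)
  fix i j
  have "\<forall>\<sigma>\<in>S. M \<sigma>$i$j = M \<sigma>$j$i" using assms(3) psd_iff by blast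
  then show "avg S M $ i $ j = avg S M $ j $ i" by (simp cong: sum.cong)
next
  fix x :: "real^'n"
  have "0 \<le> (\<Sum>\<sigma>\<in>S. \<Sum>i\<in>UNIV. \<Sum>j\<in>UNIV. x$i * M \<sigma>$i$j * x$j) / real (card S)"
  proof -
    have "\<forall>\<sigma>\<in>S. 0 \<le> (\<Sum>i\<in>UNIV. \<Sum>j\<in>UNIV. x$i * M \<sigma>$i$j * x$j)"
      using assms(3) psd_iff by blast
    then show ?thesis by (intro divide_nonneg_nonneg sum_nonneg[of S]) auto
  qed
  also have "\<dots> = (\<Sum>i\<in>UNIV. \<Sum>j\<in>UNIV. x$i * avg S M$i$j * x$j)"
    by (simp add: sum_divide_distrib sum_distrib_left sum_distrib_right mult_ac
        sum.swap[of _ S])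
  finally show "0 \<le> (\<Sum>i\<in>UNIV. \<Sum>j\<in>UNIV. x$i * avg S M$i$j * x$j)" .
qed


lemma block_nth[simp]:
  "block_mat k Z X $ None $ None = 1"
  "block_mat k Z X $ None $ Some b = Z $ b $ b"
  "block_mat k Z X $ Some a $ None = Z $ a $ a"
  "block_mat k Z X $ Some a $ Some b = Z $ a $ b + (real k - 1) * X $ a $ b"
  by (simp_all add: block_mat_def)

lemma block_perm:
  "block_mat k (permm \<sigma> Z) (permm \<sigma> X) = permm (map_option \<sigma>) (block_mat k Z X)"
  unfolding vec_eq_iff
proof (intro allI)
  fix i j :: "'a option"
  show "block_mat k (permm \<sigma> Z) (permm \<sigma> X) $ i $ j = permm (map_option \<sigma>) (block_mat k Z X) $ i $ j"
    by (cases i; cases j) simp_all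
qed

lemma bij_map_option:
  fixes \<sigma> :: "'a \<Rightarrow> 'a"
  assumes "bij \<sigma>" shows "bij (map_option \<sigma>)"
proof (rule bij_betw_byWitness[where f'="map_option (inv \<sigma>)"])
  show "\<forall>a\<in>UNIV. map_option (inv \<sigma>) (map_option \<sigma> a) = a"
    using assms by (auto simp: option.map_comp bij_is_inj option.map_ident option.map_id)
  show "\<forall>a'\<in>UNIV. map_option \<sigma> (map_option (inv \<sigma>) a') = a'"
  proof
    fix a' :: "'a option"
    have "\<sigma> \<circ> inv \<sigma> = id" using assms bij_is_surj surj_iff by blast
    then show "map_option \<sigma> (map_option (inv \<sigma>) a') = a'" by (simp add: option.map_comp option.map_id)
  qed
qed auto

lemma block_avg:
  fixes Zs Xs :: "'s \<Rightarrow> real^'n::finite^'n"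
  assumes "finite S" "S \<noteq> {}"
  shows "block_mat k (avg S Zs) (avg S Xs) = avg S (\<lambda>\<sigma>. block_mat k (Zs \<sigma>) (Xs \<sigma>))"
  unfolding vec_eq_iff
proof (intro allI)
  have c: "real (card S) \<noteq> 0" "0 < card S" using assms by (simp_all add: card_gt_0_iff)
  fix i j :: "'n option"
  show "block_mat k (avg S Zs) (avg S Xs) $ i $ j = avg S (\<lambda>\<sigma>. block_mat k (Zs \<sigma>) (Xs \<sigma>)) $ i $ j"
    by (cases i; cases j) (simp_all add: c sum.distrib sum_distrib_left add_divide_distrib)
qed

definition Aut :: "('n \<Rightarrow> 'n \<Rightarrow> bool) \<Rightarrow> ('n \<Rightarrow> 'n) set" where
  "Aut E = {\<sigma>. bij \<sigma> \<and> (\<forall>a b. E a b \<longleftrightarrow> E (\<sigma> a) (\<sigma> b))}"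

lemma feasible_perm:
  fixes Z X :: "real^'n::finite^'n"
  assumes "feasible E k Z X" "\<sigma> \<in> Aut E"
  shows "feasible E k (permm \<sigma> Z) (permm \<sigma> X)"
proof -
  have b: "bij \<sigma>" and e: "\<And>a b. E a b \<longleftrightarrow> E (\<sigma> a) (\<sigma> b)" using assms(2) by (auto simp: Aut_def)
  have d: "permm \<sigma> Z - permm \<sigma> X = permm \<sigma> (Z - X)" by (simp add: vec_eq_iff)
  show ?thesis using assms(1) psd_perm[OF _ b] psd_perm[OF _ bij_map_option[OF b]] e
    unfolding feasible_def sym_iff nonneg_mat_def d block_perm
    by simp
qed

lemma feasible_avg:
  fixes Zs Xs :: "'s \<Rightarrow> real^'n::finite^'n"
  assumes "finite S" "S \<noteq> {}" "\<And>\<sigma>. \<sigma> \<in> S \<Longrightarrow> feasible E k (Zs \<sigma>) (Xs \<sigma>)"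
  shows "feasible E k (avg S Zs) (avg S Xs)"
proof -
  have d: "avg S Zs - avg S Xs = avg S (\<lambda>\<sigma>. Zs \<sigma> - Xs \<sigma>)"
    by (simp add: vec_eq_iff sum_subtractf diff_divide_distrib)
  have f: "\<And>\<sigma>. \<sigma> \<in> S \<Longrightarrow> symmetric_mat (Zs \<sigma>) \<and> symmetric_mat (Xs \<sigma>) \<and>
     (\<forall>i j. E i j \<longrightarrow> Zs \<sigma> $ i $ j = 0) \<and> (\<forall>i. Xs \<sigma> $ i $ i = 0) \<and>
     nonneg_mat (Zs \<sigma>) \<and> nonneg_mat (Xs \<sigma>) \<and> psd (Zs \<sigma> - Xs \<sigma>) \<and> psd (block_mat k (Zs \<sigma>) (Xs \<sigma>))"
    using assms(3) unfolding feasible_def by blast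
  show ?thesis
    unfolding feasible_def
  proof (intro conjI)
    show "symmetric_mat (avg S Zs)" using f unfolding sym_iff by (simp cong: sum.cong)
    show "symmetric_mat (avg S Xs)" using f unfolding sym_iff by (simp cong: sum.cong)
    show "\<forall>i j. E i j \<longrightarrow> avg S Zs $ i $ j = 0" using f by simp
    show "\<forall>i. avg S Xs $ i $ i = 0" using f by simp
    show "nonneg_mat (avg S Zs)" using f unfolding nonneg_mat_def by (auto intro!: divide_nonneg_nonneg sum_nonneg)
    show "nonneg_mat (avg S Xs)" using f unfolding nonneg_mat_def by (auto intro!: divide_nonneg_nonneg sum_nonneg)
    show "psd (avg S Zs - avg S Xs)" unfolding d using f assms(1,2) by (intro psd_avg) auto
    show "psd (block_mat k (avg S Zs) (avg S Xs))" unfolding block_avg[OF assms(1,2)]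
      using f assms(1,2) by (intro psd_avg) auto
  qed
qed


lemma closed_feas:
  "closed {p :: ((real^'n::finite^'n) \<times> (real^'n^'n)). feasible E k (fst p) (snd p)}"
proof -
  have cb: "continuous_on UNIV (\<lambda>p :: ((real^'n^'n) \<times> (real^'n^'n)). block_mat k (fst p) (snd p) $ i $ j)" for i j
    by (cases i; cases j) (simp_all add: continuous_intros)
  show ?thesis
    unfolding feasible_def psd_iff sym_iff nonneg_mat_def
    by (intro closed_Collect_conj closed_Collect_all closed_Collect_eq closed_Collect_le
        closed_Collect_imp open_Collect_const continuous_intros cb)
qed

lemma feas_bounds:
  assumes "feasible E k Z X" "k \<ge> 1"
  shows "0 \<le> Z$i$j \<and> Z$i$j \<le> 2 \<and> 0 \<le> X$i$j \<and> X$i$j \<le> 2"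
proof -
  have f: "symmetric_mat Z" "symmetric_mat X" "\<forall>i. X$i$i = 0" "nonneg_mat Z" "nonneg_mat X"
    "psd (Z - X)" "psd (block_mat k Z X)" using assms(1) unfolding feasible_def by auto
  have nz: "\<And>a b. 0 \<le> Z$a$b" and nx: "\<And>a b. 0 \<le> X$a$b" using f unfolding nonneg_mat_def by auto
  have sz: "\<And>a b. Z$a$b = Z$b$a" and sx: "\<And>a b. X$a$b = X$b$a" using f unfolding sym_iff by auto
  have d1: "Z$a$a \<le> 1" for a
  proof -
    have "0 \<le> (- Z$a$a) * (- Z$a$a) * 1 + (- Z$a$a) * 1 * (Z$a$a + Z$a$a) + 1 * 1 * Z$a$a"
      using psd2[OF f(7), of None "Some a" "- Z$a$a" 1] f(3) by simp
    then have "0 \<le> Z$a$a * (1 - Z$a$a)" by (simp add: algebra_simps)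
    moreover have "0 \<le> Z$a$a" by (rule nz)
    ultimately show ?thesis
      by (smt (verit) mult_pos_neg)
  qed
  have o1: "Z$a$b \<le> 1" for a b
  proof (cases "a = b")
    case True then show ?thesis using d1 by simp
  next
    case False
    have "0 \<le> 1 * 1 * (Z$a$a + (real k - 1) * X$a$a) + 1 * (-1) * ((Z$a$b + (real k - 1) * X$a$b) + (Z$b$a + (real k - 1) * X$b$a))
       + (-1) * (-1) * (Z$b$b + (real k - 1) * X$b$b)"
      using psd2[OF f(7), of "Some a" "Some b" 1 "-1"] False by simp
    moreover have "0 \<le> (real k - 1) * X$a$b" using assms(2) nx by simp
    ultimately show ?thesis using d1[of a] d1[of b] f(3) sz[of a b] sx[of a b] by simp
  qed
  have x2: "X$a$b \<le> 2" for a b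
  proof (cases "a = b")
    case True then show ?thesis using f(3) by simp
  next
    case False
    have "0 \<le> 1 * 1 * (Z - X)$a$a + 1 * 1 * ((Z - X)$a$b + (Z - X)$b$a) + 1 * 1 * (Z - X)$b$b"
      using psd2[OF f(6) False, of 1 1] .
    then show ?thesis using d1[of a] d1[of b] o1[of a b] nz[of a b] f(3) sz[of a b] sx[of a b] by simp
  qed
  show ?thesis using nz nx o1 x2 by (smt (verit))
qed

lemma norm_mat_le:
  fixes Z :: "real^'n::finite^'n"
  assumes "\<And>i j. \<bar>Z$i$j\<bar> \<le> c"
  shows "norm Z \<le> real CARD('n) * (real CARD('n) * c)"
proof -
  have "norm Z \<le> (\<Sum>i\<in>UNIV. norm (Z$i))"
    unfolding norm_vec_def by (rule L2_set_le_sum) auto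
  also have "\<dots> \<le> (\<Sum>i\<in>(UNIV::'n set). \<Sum>j\<in>(UNIV::'n set). c)"
  proof (rule sum_mono)
    fix i
    have "norm (Z$i) \<le> (\<Sum>j\<in>UNIV. \<bar>Z$i$j\<bar>)" by (rule norm_le_l1_cart)
    also have "\<dots> \<le> (\<Sum>j\<in>(UNIV::'n set). c)" by (rule sum_mono) (rule assms)
    finally show "norm (Z$i) \<le> (\<Sum>j\<in>(UNIV::'n set). c)" .
  qed
  also have "\<dots> = real CARD('n) * (real CARD('n) * c)" by simp
  finally show ?thesis .
qed

lemma compact_feas:
  assumes "k \<ge> 1"
  shows "compact {p :: ((real^'n::finite^'n) \<times> (real^'n^'n)). feasible E k (fst p) (snd p)}"
  unfolding compact_eq_bounded_closed
proof
  show "closed {p :: ((real^'n::finite^'n) \<times> (real^'n^'n)). feasible E k (fst p) (snd p)}" by (rule closed_feas)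
  show "bounded {p :: ((real^'n::finite^'n) \<times> (real^'n^'n)). feasible E k (fst p) (snd p)}"
    unfolding bounded_iff
  proof (intro exI ballI)
    fix p :: "(real^'n::finite^'n) \<times> (real^'n^'n)"
    assume "p \<in> {p. feasible E k (fst p) (snd p)}"
    then have fp: "feasible E k (fst p) (snd p)" by simp
    have a: "\<bar>fst p$i$j\<bar> \<le> 2" "\<bar>snd p$i$j\<bar> \<le> 2" for i j using feas_bounds[OF fp assms, of i j] by auto
    have "norm p \<le> norm (fst p) + norm (snd p)" by (metis norm_Pair_le prod.collapse)
    also have "\<dots> \<le> real CARD('n) * (real CARD('n) * 2) + real CARD('n) * (real CARD('n) * 2)"
      by (intro add_mono norm_mat_le a)
    finally show "norm p \<le> real CARD('n) * (real CARD('n) * 2) + real CARD('n) * (real CARD('n) * 2)" .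
  qed
qed

lemma feas_zero: "feasible E k (0 :: real^'n::finite^'n) 0"
proof -
  have q: "x$i * block_mat k (0 :: real^'n::finite^'n) 0 $i$j * x$j = (if j = None then (if i = None then x$None * x$None else 0) else 0)"
    for x :: "real^'n option" and i j
    by (cases i; cases j) simp_all
  have "psd (block_mat k (0 :: real^'n::finite^'n) 0)"
    unfolding psd_iff
  proof (intro conjI allI)
    fix i j :: "'n option" show "block_mat k (0 :: real^'n::finite^'n) 0 $ i $ j = block_mat k 0 0 $ j $ i"
      by (cases i; cases j) simp_all
  next
    fix x :: "real^'n option"
    show "0 \<le> (\<Sum>i\<in>UNIV. \<Sum>j\<in>UNIV. x$i * block_mat k (0 :: real^'n::finite^'n) 0 $i$j * x$j)"
      unfolding q by (simp add: sum.delta)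
  qed
  moreover have "psd (0 :: real^'n::finite^'n)" unfolding psd_iff by simp
  ultimately show ?thesis unfolding feasible_def sym_iff nonneg_mat_def by simp
qed


lemma aut_shift:
  assumes "\<tau> \<in> Aut E"
  shows "bij_betw (\<lambda>\<sigma>. \<sigma> \<circ> \<tau>) (Aut E) (Aut E)"
proof -
  have b: "bij \<tau>" and e: "\<And>a b. E a b \<longleftrightarrow> E (\<tau> a) (\<tau> b)" using assms by (auto simp: Aut_def)
  have c1: "\<tau> \<circ> inv \<tau> = id" using b bij_is_surj surj_iff by blast
  have c2: "inv \<tau> \<circ> \<tau> = id" using b bij_is_inj inj_iff by blast
  have c1': "\<tau> (inv \<tau> a) = a" for a using c1 by (metis comp_apply id_apply)
  have ei: "E a b \<longleftrightarrow> E (inv \<tau> a) (inv \<tau> b)" for a b using e[of "inv \<tau> a" "inv \<tau> b"] c1' by simp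
  show ?thesis
  proof (rule bij_betw_byWitness[where f'="\<lambda>\<sigma>. \<sigma> \<circ> inv \<tau>"])
    show "\<forall>a\<in>Aut E. a \<circ> \<tau> \<circ> inv \<tau> = a" using c1 by (simp add: comp_assoc)
    show "\<forall>a'\<in>Aut E. a' \<circ> inv \<tau> \<circ> \<tau> = a'" using c2 by (simp add: comp_assoc)
    show "(\<lambda>\<sigma>. \<sigma> \<circ> \<tau>) ` Aut E \<subseteq> Aut E"
      using b e by (auto simp: Aut_def intro: bij_comp)
    show "(\<lambda>\<sigma>. \<sigma> \<circ> inv \<tau>) ` Aut E \<subseteq> Aut E"
      using bij_imp_bij_inv[OF b] ei by (auto simp: Aut_def intro: bij_comp)
  qed
qed

theorem proposition2:
  fixes E :: "'n::finite \<Rightarrow> 'n \<Rightarrow> bool" and k :: nat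
  assumes "simple_graph E" and "vertex_transitive E" and "k \<ge> 1"
  shows "\<exists>Z X. feasible E k Z X
           \<and> (\<forall>Z' X'. feasible E k Z' X' \<longrightarrow> trace Z' \<le> trace Z)
           \<and> (\<forall>i j. i \<noteq> j \<longrightarrow> Z $ i $ i - Z $ i $ j - (real k - 1) * X $ i $ j \<ge> 0)"
proof -
  let ?S = "{p :: ((real^'n^'n) \<times> (real^'n^'n)). feasible E k (fst p) (snd p)}"
  have "\<exists>p\<in>?S. \<forall>q\<in>?S. trace (fst q) \<le> trace (fst p)"
  proof (rule continuous_attains_sup)
    show "compact ?S" by (rule compact_feas[OF assms(3)])
    show "?S \<noteq> {}" using feas_zero[of E k] by (metis (mono_tags) empty_iff fst_conv mem_Collect_eq snd_conv)
    show "continuous_on ?S (\<lambda>p. trace (fst p))" unfolding trace_def by (intro continuous_intros)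
  qed
  then obtain Z0 X0 where f0: "feasible E k Z0 X0"
    and opt0: "\<And>Z' X'. feasible E k Z' X' \<Longrightarrow> trace Z' \<le> trace Z0"
    by (metis (mono_tags, lifting) fst_conv mem_Collect_eq snd_conv)
  define A where "A = Aut E"
  have finA: "finite A" by simp
  have idA: "id \<in> A" by (simp add: A_def Aut_def)
  then have neA: "A \<noteq> {}" by auto
  have cA: "real (card A) \<noteq> 0" using finA neA by simp
  define Zb where "Zb = avg A (\<lambda>\<sigma>. permm \<sigma> Z0)"
  define Xb where "Xb = avg A (\<lambda>\<sigma>. permm \<sigma> X0)"
  have fb: "feasible E k Zb Xb" unfolding Zb_def Xb_def
    by (rule feasible_avg[OF finA neA feasible_perm[OF f0]]) (simp add: A_def)
  have tr: "trace Zb = trace Z0"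
  proof -
    have r: "(\<Sum>i\<in>UNIV. Z0 $ \<sigma> i $ \<sigma> i) = trace Z0" if "\<sigma> \<in> A" for \<sigma>
    proof -
      have "bij \<sigma>" using that by (simp add: A_def Aut_def)
      then show ?thesis unfolding trace_def by (rule sum.reindex_bij_betw)
    qed
    have "trace Zb = (\<Sum>\<sigma>\<in>A. \<Sum>i\<in>UNIV. Z0 $ \<sigma> i $ \<sigma> i) / real (card A)"
      unfolding trace_def Zb_def by (simp add: sum_divide_distrib sum.swap[of _ A])
    also have "\<dots> = (\<Sum>\<sigma>\<in>A. trace Z0) / real (card A)" using r by simp
    also have "\<dots> = trace Z0" using cA by simp
    finally show ?thesis .
  qed
  have diag: "Zb $ j $ j = Zb $ i $ i" for i j
  proof -
    obtain \<tau> where t: "bij \<tau>" "\<forall>a b. E a b \<longleftrightarrow> E (\<tau> a) (\<tau> b)" "\<tau> i = j"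
      using assms(2) unfolding vertex_transitive_def by blast
    have tA: "\<tau> \<in> A" using t by (simp add: A_def Aut_def)
    have "(\<Sum>\<sigma>\<in>A. Z0 $ \<sigma> j $ \<sigma> j) = (\<Sum>\<sigma>\<in>A. Z0 $ (\<sigma> \<circ> \<tau>) i $ (\<sigma> \<circ> \<tau>) i)"
      using t(3) by simp
    also have "\<dots> = (\<Sum>\<sigma>\<in>A. Z0 $ \<sigma> i $ \<sigma> i)"
      using sum.reindex_bij_betw[OF aut_shift[OF tA[unfolded A_def]], of "\<lambda>\<sigma>. Z0 $ \<sigma> i $ \<sigma> i"]
      by (simp add: A_def)
    finally show ?thesis unfolding Zb_def by simp
  qed
  have ineq: "Zb $ i $ i - Zb $ i $ j - (real k - 1) * Xb $ i $ j \<ge> 0" if "i \<noteq> j" for i j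
  proof -
    have f: "symmetric_mat Zb" "symmetric_mat Xb" "\<forall>i. Xb$i$i = 0" "psd (block_mat k Zb Xb)"
      using fb unfolding feasible_def by auto
    have "0 \<le> 1 * 1 * (Zb$i$i + (real k - 1) * Xb$i$i) + 1 * (-1) * ((Zb$i$j + (real k - 1) * Xb$i$j) + (Zb$j$i + (real k - 1) * Xb$j$i))
       + (-1) * (-1) * (Zb$j$j + (real k - 1) * Xb$j$j)"
      using psd2[OF f(4), of "Some i" "Some j" 1 "-1"] that by simp
    moreover have "Zb$j$i = Zb$i$j" "Xb$j$i = Xb$i$j" using f(1,2) unfolding sym_iff by auto
    moreover have "Xb$i$i = 0" "Xb$j$j = 0" using f(3) by auto
    ultimately show ?thesis using diag[of i j] by simp
  qed
  show ?thesis
    using fb tr opt0 ineq by (intro exI[of _ Zb] exI[of _ Xb]) auto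
qed

end
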